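(* Let $K$ be a compact Hausdorff space containing a nontrivial convergent sequence (a sequence $(x_n)$ converging to a point $x\notin\{x_n:n\in\mathbb{N}\}$). Then $C(K)$ fails the ball fixed point property. In particular, $C(K)$ fails the ball fixed point property for every infinite metrizable compact space $K$.
   Context: $C(K)$ is the real Banach space of continuous functions $K\to\mathbb{R}$ with the sup norm. A real Banach space $X$ has the ball fixed point property (BFPP) if every nonexpansive map $T\colon B_X\to B_X$ (i.e. $\|Tx-Ty\|\le\|x-y\|$) has a fixed point, where $B_X$ is the closed unit ball. *)

theory Defs
  imports "HOL-Analysis.Analysis"
begin

definition ball_fpp :: "'b::real_normed_vector itself \<Rightarrow> bool" where
  "ball_fpp _ \<longleftrightarrow>
     (\<forall>T :: 'b \<Rightarrow> 'b.
        (\<forall>x\<in>cball 0 1. T x \<in> cball 0 1) \<and>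
        (\<forall>x\<in>cball 0 1. \<forall>y\<in>cball 0 1. norm (T x - T y) \<le> norm (x - y))
        \<longrightarrow> (\<exists>x\<in>cball 0 1. T x = x))"

end

theory Submission
  imports Defs "HOL-Analysis.Analysis"
begin

lemma inj_subseq:
  fixes s :: "nat \<Rightarrow> 'a::topological_space"
  assumes H: "Hausdorff_space (euclidean::'a topology)"
    and lim: "s \<longlonglongrightarrow> p" and np: "p \<notin> range s"
  obtains r where "inj r" "range r \<subseteq> range s" "r \<longlonglongrightarrow> p"
proof -
  have fc: "\<And>F::'a set. finite F \<Longrightarrow> closed F"
    using Hausdorff_imp_t1_space[OF H] unfolding t1_space_closedin_finite closed_closedin by auto
  have "infinite (range s)"
  proof
    assume "finite (range s)"
    then have "closed (range s)" by (rule fc)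
    from Lim_in_closed_set[OF this _ _ lim] np show False by auto
  qed
  then obtain r :: "nat \<Rightarrow> 'a" where r: "inj r" "range r \<subseteq> range s"
    using infinite_iff_countable_subset[of "range s"] by auto
  have "r \<longlonglongrightarrow> p"
  proof (rule topological_tendstoI)
    fix V assume V: "open V" "p \<in> V"
    from topological_tendstoD[OF lim V] obtain N where N: "\<And>n. n \<ge> N \<Longrightarrow> s n \<in> V"
      unfolding eventually_sequentially by auto
    have "finite (r -` (s ` {..<N}))" using r(1) by (intro finite_vimageI) auto
    then have "eventually (\<lambda>k. r k \<notin> s ` {..<N}) cofinite"
      unfolding eventually_cofinite by (simp add: vimage_def)
    then have ev: "eventually (\<lambda>k. r k \<notin> s ` {..<N}) sequentially"
      by (simp add: cofinite_eq_sequentially)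
    show "eventually (\<lambda>k. r k \<in> V) sequentially"
    proof (rule eventually_mono[OF ev])
      fix k assume k: "r k \<notin> s ` {..<N}"
      from r(2) obtain n where n: "r k = s n" by auto
      with k have "n \<ge> N" by (cases "n < N") auto
      with N n show "r k \<in> V" by auto
    qed
  qed
  with r show ?thesis using that by blast
qed


lemma sep_fun:
  fixes r :: "nat \<Rightarrow> 'a::topological_space"
  assumes cpt: "compact (UNIV::'a set)" and H: "Hausdorff_space (euclidean::'a topology)"
    and inj: "inj r" and lim: "r \<longlonglongrightarrow> p" and np: "p \<notin> range r"
  obtains g :: "'a \<Rightarrow> real" where "continuous_on UNIV g" "\<And>x. g x \<in> {-1..1}"
    "\<And>k. g (r k) = (if even k then 1 else -1) / real (k + 1)"
proof -
  have fc: "\<And>F::'a set. finite F \<Longrightarrow> closed F"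
    using Hausdorff_imp_t1_space[OF H] unfolding t1_space_closedin_finite closed_closedin by auto
  have sepp: "\<exists>U V. open U \<and> open V \<and> x \<in> U \<and> p \<in> V \<and> U \<inter> V = {}" if "x \<noteq> p" for x
  proof -
    have "\<exists>U V. openin euclidean U \<and> openin euclidean V \<and> x \<in> U \<and> p \<in> V \<and> disjnt U V"
      using H that unfolding Hausdorff_space_def by (metis UNIV_I topspace_euclidean)
    then show ?thesis by (metis disjnt_def open_openin)
  qed
  define S where "S = insert p (range r)"
  define \<psi> where "\<psi> y = (if y = p then 0 else (if even (inv r y) then 1 else -1) / real (inv r y + 1))" for y
  have \<psi>r: "\<psi> (r k) = (if even k then 1 else -1) / real (k + 1)" for k
    using np inj unfolding \<psi>_def by (auto simp: inv_f_f)
  have \<psi>p: "\<psi> p = 0" by (simp add: \<psi>_def)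
  have closedS: "closed S"
    unfolding closed_def
  proof (subst open_subopen, intro ballI)
    fix x assume "x \<in> - S"
    then have xp: "x \<noteq> p" and xr: "x \<notin> range r" by (auto simp: S_def)
    from sepp[OF xp] obtain U V where UV: "open U" "open V" "x \<in> U" "p \<in> V" "U \<inter> V = {}" by blast
    from topological_tendstoD[OF lim UV(2,4)] obtain N where N: "\<And>n. n \<ge> N \<Longrightarrow> r n \<in> V"
      unfolding eventually_sequentially by auto
    have "open (U - r ` {..<N})" using UV(1) fc by (intro open_Diff) auto
    moreover have "x \<in> U - r ` {..<N}" using UV xr by auto
    moreover have "U - r ` {..<N} \<subseteq> - S"
    proof
      fix y assume y: "y \<in> U - r ` {..<N}"
      have "y \<noteq> p" using y UV by auto
      moreover have "y \<notin> range r"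
      proof
        assume "y \<in> range r" then obtain n where n: "y = r n" by auto
        show False
        proof (cases "n < N")
          case True with y n show False by auto
        next
          case False with N n y UV show False by auto
        qed
      qed
      ultimately show "y \<in> - S" by (auto simp: S_def)
    qed
    ultimately show "\<exists>T. open T \<and> x \<in> T \<and> T \<subseteq> - S" by blast
  qed
  have iso: "\<exists>U. open U \<and> r n \<in> U \<and> U \<inter> S = {r n}" for n
  proof -
    have "r n \<noteq> p" using np by auto
    from sepp[OF this] obtain U V where UV: "open U" "open V" "r n \<in> U" "p \<in> V" "U \<inter> V = {}" by blast
    from topological_tendstoD[OF lim UV(2,4)] obtain N where N: "\<And>m. m \<ge> N \<Longrightarrow> r m \<in> V"
      unfolding eventually_sequentially by auto
    let ?W = "U - (r ` {..<N} - {r n})"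
    have "open ?W" using UV(1) fc by (intro open_Diff) auto
    moreover have "r n \<in> ?W" using UV by auto
    moreover have "?W \<inter> S \<subseteq> {r n}"
    proof
      fix y assume y: "y \<in> ?W \<inter> S"
      have "y \<noteq> p" using y UV by auto
      then obtain m where m: "y = r m" using y by (auto simp: S_def)
      show "y \<in> {r n}"
      proof (cases "m < N")
        case True with y m show ?thesis by auto
      next
        case False with N m y UV show ?thesis by auto
      qed
    qed
    ultimately show ?thesis by (auto simp: S_def)
  qed
  have contS: "continuous_on S \<psi>"
    unfolding continuous_on_def
  proof (intro ballI)
    fix x assume xS: "x \<in> S"
    show "(\<psi> \<longlongrightarrow> \<psi> x) (at x within S)"
    proof (cases "x = p")
      case True
      show ?thesis unfolding True \<psi>p
      proof (rule tendstoI)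
        fix e :: real assume e: "e > 0"
        obtain M :: nat where M: "1 / e < real M" using reals_Archimedean2 by blast
        have oM: "open (UNIV - r ` {..<M})" using fc by (intro open_Diff) auto
        have pM: "p \<in> UNIV - r ` {..<M}" using np by auto
        show "eventually (\<lambda>y. dist (\<psi> y) 0 < e) (at p within S)"
          unfolding eventually_at_topological
        proof (intro exI conjI ballI impI, rule oM, rule pM)
          fix y assume y: "y \<in> UNIV - r ` {..<M}" "y \<noteq> p" "y \<in> S"
          then obtain k where k: "y = r k" by (auto simp: S_def)
          with y have kM: "k \<ge> M" by (cases "k < M") auto
          have "dist (\<psi> y) 0 = 1 / real (k + 1)" using k \<psi>r by auto
          also have "\<dots> < e"
          proof -
            have "1 / e < real (k+1)" using M kM by linarith
            then show ?thesis using e by (simp add: field_simps)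
          qed
          finally show "dist (\<psi> y) 0 < e" .
        qed
      qed
    next
      case False
      then obtain n where n: "x = r n" using xS by (auto simp: S_def)
      from iso[of n] obtain U where U: "open U" "r n \<in> U" "U \<inter> S = {r n}" by blast
      have "at x within S = bot"
        unfolding trivial_limit_within islimpt_def using U n by auto
      then show ?thesis by simp
    qed
  qed
  have "compact_space (euclidean::'a topology)"
    using cpt unfolding compact_space_def compactin_euclidean_iff topspace_euclidean .
  then have "normal_space (euclidean::'a topology)"
    by (rule compact_Hausdorff_or_regular_imp_normal_space[OF _ disjI1[OF H]])
  moreover have "closedin euclidean S" using closedS unfolding closed_closedin .
  moreover have "continuous_map (subtopology euclidean S) euclideanreal \<psi>"
    using contS unfolding continuous_map_iff_continuous .
  moreover have "\<psi> ` S \<subseteq> {-1..1}"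
  proof
    fix y assume "y \<in> \<psi> ` S"
    then obtain x where x: "x \<in> S" "y = \<psi> x" by auto
    show "y \<in> {-1..1}"
    proof (cases "x = p")
      case True then show ?thesis using x \<psi>p by simp
    next
      case False
      then obtain k where k: "x = r k" using x by (auto simp: S_def)
      define q where "q = 1 / real (k+1)"
      have q1: "q \<le> 1" unfolding q_def by (simp add: divide_le_eq)
      have q0: "0 \<le> q" unfolding q_def by simp
      have "y = (if even k then q else - q)" using x k \<psi>r[of k] unfolding q_def by simp
      then show ?thesis using q0 q1 by auto
    qed
  qed
  ultimately obtain g where g: "continuous_map euclidean euclideanreal g"
     "\<And>x. x \<in> S \<Longrightarrow> g x = \<psi> x" "g ` topspace euclidean \<subseteq> {-1..1}"
    by (rule Tietze_extension_closed_real_interval[where a="-1" and b=1]) simp_all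
  show ?thesis
  proof (rule that)
    show "continuous_on UNIV g" using g(1) by (simp add: continuous_map_iff_continuous2)
    show "g x \<in> {-1..1}" for x using g(3) by (auto simp: image_subset_iff)
    show "g (r k) = (if even k then 1 else -1) / real (k + 1)" for k
      using g(2)[of "r k"] \<psi>r by (auto simp: S_def)
  qed
qed


lemma no_bfpp_from_g:
  fixes r :: "nat \<Rightarrow> 'a::topological_space" and g :: "'a \<Rightarrow> real"
  assumes lim: "r \<longlonglongrightarrow> p" and gc: "continuous_on UNIV g"
    and gr: "\<And>k. g (r k) = (if even k then 1 else -1) / real (k + 1)"
  shows "\<not> ball_fpp TYPE('a \<Rightarrow>\<^sub>C real)"
proof -
  define c :: "real \<Rightarrow> real" where "c a = max (-1) (min 1 a)" for a
  have c_lip: "\<bar>c a - c b\<bar> \<le> \<bar>a - b\<bar>" for a b unfolding c_def by linarith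
  have c_bd: "norm (c a) \<le> 1" for a unfolding c_def by auto
  have c_bd': "\<bar>c a\<bar> \<le> 1" for a unfolding c_def by auto
  have cc: "continuous_on UNIV c" unfolding c_def by (intro continuous_intros)
  define T :: "('a \<Rightarrow>\<^sub>C real) \<Rightarrow> ('a \<Rightarrow>\<^sub>C real)"
    where "T f = Bcontfun (\<lambda>t. c (apply_bcontfun f t + g t))" for f
  have Tapp: "apply_bcontfun (T f) t = c (apply_bcontfun f t + g t)" for f t
  proof -
    have "(\<lambda>t. c (apply_bcontfun f t + g t)) \<in> bcontfun"
    proof (rule bcontfun_normI)
      show "continuous_on UNIV (\<lambda>t. c (apply_bcontfun f t + g t))"
        by (rule continuous_on_compose2[OF cc]) (auto intro!: continuous_intros gc)
      show "norm (c (apply_bcontfun f t + g t)) \<le> 1" for t by (rule c_bd)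
    qed
    then show ?thesis unfolding T_def by (simp add: Bcontfun_inverse)
  qed
  have ball: "T f \<in> cball 0 1" for f
    unfolding mem_cball_0 by (rule norm_bound) (simp add: Tapp c_bd')
  have lip: "norm (T f - T h) \<le> norm (f - h)" for f h
  proof (rule norm_bound)
    fix t
    have "norm (apply_bcontfun (T f - T h) t) = \<bar>c (f t + g t) - c (h t + g t)\<bar>"
      by (simp add: Tapp)
    also have "\<dots> \<le> \<bar>f t - h t\<bar>" using c_lip[of "f t + g t" "h t + g t"] by simp
    also have "\<dots> = norm (apply_bcontfun (f - h) t)" by simp
    also have "\<dots> \<le> norm (f - h)" by (rule norm_bounded)
    finally show "norm (apply_bcontfun (T f - T h) t) \<le> norm (f - h)" .
  qed
  have nofix: "T f \<noteq> f" for f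
  proof
    assume fx: "T f = f"
    have fx': "apply_bcontfun f t = c (apply_bcontfun f t + g t)" for t
      using Tapp[of f t] fx by simp
    have ev: "apply_bcontfun f (r (2*k)) = 1" for k
    proof -
      have "g (r (2*k)) > 0" using gr[of "2*k"] by simp
      then show ?thesis using fx'[of "r (2*k)"] unfolding c_def by linarith
    qed
    have od: "apply_bcontfun f (r (2*k+1)) = -1" for k
    proof -
      have "g (r (2*k+1)) < 0" using gr[of "2*k+1"] by simp
      then show ?thesis using fx'[of "r (2*k+1)"] unfolding c_def by linarith
    qed
    have L: "(\<lambda>k. apply_bcontfun f (r k)) \<longlonglongrightarrow> apply_bcontfun f p"
      by (rule continuous_on_tendsto_compose[OF continuous_on_apply_bcontfun[of UNIV] lim]) auto
    have s1: "strict_mono (\<lambda>k::nat. 2*k)" by (auto simp: strict_mono_def)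
    have s2: "strict_mono (\<lambda>k::nat. 2*k+1)" by (auto simp: strict_mono_def)
    have "(\<lambda>k. apply_bcontfun f (r (2*k))) \<longlonglongrightarrow> apply_bcontfun f p"
      using LIMSEQ_subseq_LIMSEQ[OF L s1] by (simp add: o_def)
    then have "apply_bcontfun f p = 1" using ev by (simp add: LIMSEQ_const_iff)
    moreover have "(\<lambda>k. apply_bcontfun f (r (2*k+1))) \<longlonglongrightarrow> apply_bcontfun f p"
      using LIMSEQ_subseq_LIMSEQ[OF L s2] by (simp add: o_def)
    then have "apply_bcontfun f p = -1" using od by (simp add: LIMSEQ_const_iff)
    ultimately show False by simp
  qed
  show ?thesis unfolding ball_fpp_def
    using ball lip nofix by blast
qed


lemma metr_seq:
  assumes cpt: "compact (UNIV::'k::topological_space set)" and inf: "infinite (UNIV::'k set)"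
    and m: "metrizable_space (euclidean::'k topology)"
  obtains s :: "nat \<Rightarrow> 'k::topological_space" and p where "s \<longlonglongrightarrow> p" "p \<notin> range s"
proof -
  have "\<exists>x\<in>UNIV. x islimpt (UNIV::'k set)"
    using Heine_Borel_imp_Bolzano_Weierstrass[OF cpt inf subset_UNIV] .
  then obtain p where p: "p islimpt (UNIV::'k set)" by blast
  from m obtain M d where Md: "Metric_space M d" and E: "(euclidean::'k topology) = Metric_space.mtopology M d"
    unfolding metrizable_space_def by blast
  interpret Metric_space M d by (rule Md)
  have MU: "M = UNIV"
  proof -
    have "topspace (euclidean::'k topology) = M" unfolding E by (rule topspace_mtopology)
    then show ?thesis by simp
  qed
  have ex: "\<exists>y. y \<noteq> p \<and> d y p < 1 / real (Suc n)" for n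
  proof -
    let ?B = "mball p (1 / real (Suc n))"
    have "openin mtopology ?B" by (rule openin_mball)
    then have oB: "open ?B" unfolding open_openin E .
    have "p \<in> ?B" unfolding centre_in_mball_iff using MU by simp
    from p[unfolded islimpt_def, rule_format, OF this oB] obtain y where "y \<in> ?B" "y \<noteq> p" by blast
    then have "d p y < 1 / real (Suc n)" unfolding in_mball by simp
    then show ?thesis using \<open>y \<noteq> p\<close> commute[of p y] MU by auto
  qed
  obtain s where s0: "\<forall>n. s n \<noteq> p \<and> d (s n) p < 1 / real (Suc n)"
    using choice[of "\<lambda>n y. y \<noteq> p \<and> d y p < 1 / real (Suc n)"] ex by blast
  have s: "\<And>n. s n \<noteq> p" "\<And>n. d (s n) p < 1 / real (Suc n)" using s0 by auto
  have "limitin mtopology s p sequentially"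
    unfolding limitin_metric
  proof (intro conjI allI impI)
    show "p \<in> M" using MU by simp
    fix e :: real assume e: "e > 0"
    obtain N :: nat where N: "1 / e < real N" using reals_Archimedean2 by blast
    show "\<forall>\<^sub>F x in sequentially. s x \<in> M \<and> d (s x) p < e"
      unfolding eventually_sequentially
    proof (intro exI allI impI)
      fix n assume n: "N \<le> n"
      have "1 / e < real (Suc n)" using N n by linarith
      then have "1 / real (Suc n) < e" using e by (simp add: field_simps)
      then show "s n \<in> M \<and> d (s n) p < e" using s(2)[of n] MU by simp
    qed
  qed
  then have "s \<longlonglongrightarrow> p" unfolding E[symmetric] limitin_canonical_iff .
  moreover have "p \<notin> range s" using s(1) by auto
  ultimately show ?thesis using that by blast
qed

lemma core:
  fixes s :: "nat \<Rightarrow> 'a::topological_space"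
  assumes cpt: "compact (UNIV::'a set)" and H: "Hausdorff_space (euclidean::'a topology)"
    and lim: "s \<longlonglongrightarrow> p" and np: "p \<notin> range s"
  shows "\<not> ball_fpp TYPE('a \<Rightarrow>\<^sub>C real)"
proof -
  obtain r where r: "inj r" "range r \<subseteq> range s" "r \<longlonglongrightarrow> p"
    by (rule inj_subseq[OF H lim np])
  have npr: "p \<notin> range r" using r(2) np by blast
  obtain g :: "'a \<Rightarrow> real" where g: "continuous_on UNIV g"
    "\<And>k. g (r k) = (if even k then 1 else -1) / real (k + 1)"
    by (rule sep_fun[OF cpt H r(1) r(3) npr]) blast
  show ?thesis by (rule no_bfpp_from_g[OF r(3) g(1) g(2)])
qed

theorem mainTheorem3:
  shows "(compact (UNIV :: 'a::t2_space set) \<and>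
          (\<exists>(s :: nat \<Rightarrow> 'a) p. s \<longlonglongrightarrow> p \<and> p \<notin> range s)
          \<longrightarrow> \<not> ball_fpp TYPE('a \<Rightarrow>\<^sub>C real))
       \<and> (compact (UNIV :: 'k::topological_space set) \<and> infinite (UNIV :: 'k set) \<and>
          metrizable_space (euclidean :: 'k topology)
          \<longrightarrow> \<not> ball_fpp TYPE('k \<Rightarrow>\<^sub>C real))"
proof (intro conjI impI)
  assume A: "compact (UNIV :: 'a::t2_space set) \<and>
          (\<exists>(s :: nat \<Rightarrow> 'a) p. s \<longlonglongrightarrow> p \<and> p \<notin> range s)"
  have H: "Hausdorff_space (euclidean :: 'a topology)"
  proof -
    have "\<exists>U V. openin euclidean U \<and> openin euclidean V \<and> x \<in> U \<and> y \<in> V \<and> disjnt U V"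
      if "x \<noteq> y" for x y :: 'a
      using hausdorff[OF that] by (metis disjnt_def open_openin)
    then show ?thesis unfolding Hausdorff_space_def by blast
  qed
  from A obtain s :: "nat \<Rightarrow> 'a" and p where "s \<longlonglongrightarrow> p" "p \<notin> range s" by blast
  then show "\<not> ball_fpp TYPE('a \<Rightarrow>\<^sub>C real)" using core[OF conjunct1[OF A] H] by blast
next
  assume A: "compact (UNIV :: 'k::topological_space set) \<and> infinite (UNIV :: 'k set) \<and>
          metrizable_space (euclidean :: 'k topology)"
  then have cpt: "compact (UNIV :: 'k set)" and inf: "infinite (UNIV :: 'k set)"
    and m: "metrizable_space (euclidean :: 'k topology)" by auto
  have H: "Hausdorff_space (euclidean :: 'k topology)" by (rule metrizable_imp_Hausdorff_space[OF m])
  obtain s :: "nat \<Rightarrow> 'k" and p where "s \<longlonglongrightarrow> p" "p \<notin> range s"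
    by (rule metr_seq[OF cpt inf m])
  then show "\<not> ball_fpp TYPE('k \<Rightarrow>\<^sub>C real)" by (rule core[OF cpt H])
qed

end
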